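(* Let $(E,\mathscr{T},\le)$ be a locally compact $T_2$-preordered Tychonoff space with $G(\le)=\bigcap_{f\in\mathcal{F}}G_f$, and let $\mathcal{H}\subseteq\mathcal{F}$ with $G(\le)=\bigcap_{h\in\mathcal{H}}G_h$. Then the $\mathcal{H}$-compactification $c:E\to cE$ is the smallest Hausdorff $T_2$-preorder compactification for which the functions in $\mathcal{H}$ are extendable as continuous isotone functions: it is a Hausdorff $T_2$-preorder compactification for which every $h\circ c^{-1}$, $h\in\mathcal{H}$, extends to a continuous isotone function on $cE$, and every Hausdorff $T_2$-preorder compactification $c':E\to c'E$ for which every $h\circ c'^{-1}$, $h\in\mathcal{H}$, extends to a continuous isotone function $c'E\to[0,1]$ dominates the $\mathcal{H}$-compactification.
   Context: $T_2$-preordered: the graph $G(\le)=\{(x,y):x\le y\}$ is closed in $E\times E$. $\mathcal{F}$ is the family of continuous isotone functions $f:E\to[0,1]$; $G_f=\{(x,y):f(x)\le f(y)\}$. $\mathcal{C}$ is the family of continuous functions $E\to[0,1]$ constant outside a compact set. The $\mathcal{H}$-compactification is $c:E\to[0,1]^{\mathcal{H}\cup\mathcal{C}}$, $c(x)=(g(x))_{g\in\mathcal{H}\cup\mathcal{C}}$, with $cE$ the closure of $c(E)$, the induced product topology, and preorder $x\le_c y$ iff $x_h\le y_h$ for all $h\in\mathcal{H}$. A Hausdorff $T_2$-preorder compactification of $E$ is a preorder embedding (continuous isotone injective, homeomorphism onto image, isotone inverse on image with induced preorder) $c:E\to cE$ with dense image into a compact Hausdorff space with a preorder having closed graph. $c_2$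 dominates $c_1$ if there is a continuous isotone $C:c_2E\to c_1E$ with $C\circ c_2=c_1$. *)

theory Defs
  imports "HOL-Analysis.Analysis"
begin

definition preorder_on_space :: "'a topology \<Rightarrow> ('a \<Rightarrow> 'a \<Rightarrow> bool) \<Rightarrow> bool" where
  "preorder_on_space X le \<longleftrightarrow>
     (\<forall>x\<in>topspace X. le x x) \<and>
     (\<forall>x\<in>topspace X. \<forall>y\<in>topspace X. \<forall>z\<in>topspace X. le x y \<longrightarrow> le y z \<longrightarrow> le x z)"

definition pgraph :: "'a topology \<Rightarrow> ('a \<Rightarrow> 'a \<Rightarrow> bool) \<Rightarrow> ('a \<times> 'a) set" where
  "pgraph X le = {(x, y). x \<in> topspace X \<and> y \<in> topspace X \<and> le x y}"

definition T2_preordered :: "'a topology \<Rightarrow> ('a \<Rightarrow> 'a \<Rightarrow> bool) \<Rightarrow> bool" where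
  "T2_preordered X le \<longleftrightarrow> preorder_on_space X le \<and> closedin (prod_topology X X) (pgraph X le)"

definition cont_iso_fns :: "'a topology \<Rightarrow> ('a \<Rightarrow> 'a \<Rightarrow> bool) \<Rightarrow> ('a \<Rightarrow> real) set" where
  "cont_iso_fns X le = {f. continuous_map X (top_of_set {0..1}) f \<and> monotone_on (topspace X) le (\<le>) f}"

definition const_out_compact :: "'a topology \<Rightarrow> ('a \<Rightarrow> real) set" where
  "const_out_compact X = {g. continuous_map X (top_of_set {0..1}) g \<and>
      (\<exists>K k. compactin X K \<and> (\<forall>x\<in>topspace X - K. g x = k))}"

definition hcomp_map :: "'a topology \<Rightarrow> ('a \<Rightarrow> real) set \<Rightarrow> 'a \<Rightarrow> (('a \<Rightarrow> real) \<Rightarrow> real)" where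
  "hcomp_map X H x = (\<lambda>g\<in>H \<union> const_out_compact X. g x)"

definition hcube :: "'a topology \<Rightarrow> ('a \<Rightarrow> real) set \<Rightarrow> (('a \<Rightarrow> real) \<Rightarrow> real) topology" where
  "hcube X H = product_topology (\<lambda>_. top_of_set {0..1}) (H \<union> const_out_compact X)"

definition hcomp_top :: "'a topology \<Rightarrow> ('a \<Rightarrow> real) set \<Rightarrow> (('a \<Rightarrow> real) \<Rightarrow> real) topology" where
  "hcomp_top X H = subtopology (hcube X H) (hcube X H closure_of (hcomp_map X H ` topspace X))"

definition hcomp_le :: "('a \<Rightarrow> real) set \<Rightarrow> (('a \<Rightarrow> real) \<Rightarrow> real) \<Rightarrow> (('a \<Rightarrow> real) \<Rightarrow> real) \<Rightarrow> bool" where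
  "hcomp_le H p q \<longleftrightarrow> (\<forall>h\<in>H. p h \<le> q h)"

definition preorder_embedding ::
  "'a topology \<Rightarrow> ('a \<Rightarrow> 'a \<Rightarrow> bool) \<Rightarrow> 'b topology \<Rightarrow> ('b \<Rightarrow> 'b \<Rightarrow> bool) \<Rightarrow> ('a \<Rightarrow> 'b) \<Rightarrow> bool" where
  "preorder_embedding X le Y leY c \<longleftrightarrow> embedding_map X Y c \<and>
     (\<forall>x\<in>topspace X. \<forall>y\<in>topspace X. le x y \<longleftrightarrow> leY (c x) (c y))"

definition T2_preorder_compactification ::
  "'a topology \<Rightarrow> ('a \<Rightarrow> 'a \<Rightarrow> bool) \<Rightarrow> 'b topology \<Rightarrow> ('b \<Rightarrow> 'b \<Rightarrow> bool) \<Rightarrow> ('a \<Rightarrow> 'b) \<Rightarrow> bool" where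
  "T2_preorder_compactification X le Y leY c \<longleftrightarrow>
     compact_space Y \<and> Hausdorff_space Y \<and> T2_preordered Y leY \<and>
     preorder_embedding X le Y leY c \<and> Y closure_of (c ` topspace X) = topspace Y"

definition extends_cont_iso ::
  "'a topology \<Rightarrow> 'b topology \<Rightarrow> ('b \<Rightarrow> 'b \<Rightarrow> bool) \<Rightarrow> ('a \<Rightarrow> 'b) \<Rightarrow> ('a \<Rightarrow> real) \<Rightarrow> bool" where
  "extends_cont_iso X Y leY c h \<longleftrightarrow>
     (\<exists>e. continuous_map Y (top_of_set {0..1}) e \<and> monotone_on (topspace Y) leY (\<le>) e \<and>
          (\<forall>x\<in>topspace X. e (c x) = h x))"

definition dominates ::
  "'a topology \<Rightarrow> 'b topology \<Rightarrow> ('b \<Rightarrow> 'b \<Rightarrow> bool) \<Rightarrow> ('a \<Rightarrow> 'b) \<Rightarrow>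
   'c topology \<Rightarrow> ('c \<Rightarrow> 'c \<Rightarrow> bool) \<Rightarrow> ('a \<Rightarrow> 'c) \<Rightarrow> bool" where
  "dominates X Y2 le2 c2 Y1 le1 c1 \<longleftrightarrow>
     (\<exists>C. continuous_map Y2 Y1 C \<and> monotone_on (topspace Y2) le2 le1 C \<and>
          (\<forall>x\<in>topspace X. C (c2 x) = c1 x))"

end

theory Submission
  imports Defs
begin

lemma coc_exists:
  assumes lc: "locally_compact_space X" and cr: "completely_regular_space X"
    and U: "openin X U" and x: "x \<in> U"
  shows "\<exists>g\<in>const_out_compact X. g x = 0 \<and> (\<forall>y\<in>topspace X - U. g y = 1)"
proof -
  have xt: "x \<in> topspace X" using U x openin_subset by blast
  obtain V K where V: "openin X V" and K: "compactin X K" and "x \<in> V" "V \<subseteq> K"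
    using lc xt unfolding locally_compact_space_def by blast
  have "closedin X (topspace X - (U \<inter> V))" using U V by blast
  moreover have "x \<in> topspace X - (topspace X - (U \<inter> V))" using x \<open>x \<in> V\<close> xt by blast
  ultimately obtain g :: "'a \<Rightarrow> real" where g: "continuous_map X (top_of_set {0..1}) g" "g x = 0"
      "g ` (topspace X - (U \<inter> V)) \<subseteq> {1}"
    using cr unfolding completely_regular_space_def by blast
  have "\<forall>y\<in>topspace X - K. g y = 1" using g(3) \<open>V \<subseteq> K\<close> by blast
  then have "g \<in> const_out_compact X"
    unfolding const_out_compact_def using g(1) K by blast
  moreover have "\<forall>y\<in>topspace X - U. g y = 1" using g(3) by blast
  ultimately show ?thesis using g(2) by blast
qed

lemma hcomp_embedding:
  assumes lc: "locally_compact_space X" and cr: "completely_regular_space X"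
    and hs: "Hausdorff_space X"
    and Hc: "\<forall>h\<in>H. continuous_map X (top_of_set {0..1}) h"
  shows "embedding_map X (hcube X H) (hcomp_map X H)"
proof -
  define I where "I = H \<union> const_out_compact X"
  define e where "e = hcomp_map X H"
  have e_def': "e x = (\<lambda>g\<in>I. g x)" for x  by (simp add: e_def hcomp_map_def I_def)
  have contI: "continuous_map X (top_of_set {0..1}) g" if "g \<in> I" for g
    using that Hc by (auto simp: I_def const_out_compact_def)
  have cont: "continuous_map X (product_topology (\<lambda>_. top_of_set {0..1}) I) e"
    unfolding continuous_map_componentwise
    using contI by (auto simp: e_def')
  have inj: "inj_on e (topspace X)"
  proof (rule inj_onI)
    fix x y assume x: "x \<in> topspace X" and y: "y \<in> topspace X" and exy: "e x = e y"
    show "x = y"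
    proof (rule ccontr)
      assume "x \<noteq> y"
      have "openin X (topspace X - {y})"
        using hs y by (simp add: closedin_Hausdorff_singleton openin_diff)
      moreover have "x \<in> topspace X - {y}" using x \<open>x \<noteq> y\<close> by blast
      ultimately obtain g where g: "g \<in> const_out_compact X" "g x = 0" "\<forall>z\<in>topspace X - (topspace X - {y}). g z = 1"
        using coc_exists[OF lc cr] by blast
      then have "e x g \<noteq> e y g" using y by (simp add: e_def' I_def)
      then show False using exy by simp
    qed
  qed
  then obtain e' where e': "\<And>x. x \<in> topspace X \<Longrightarrow> e' (e x) = x"
    by (metis inv_into_f_f)
  have "continuous_map (subtopology (product_topology (\<lambda>f. top_of_set {0..1}) I) (e ` topspace X)) X e'"
  proof (clarsimp simp add: continuous_map_atin limitin_atin openin_subtopology_alt e')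
    fix x U
    assume "e x \<in> I \<rightarrow>\<^sub>E {0..1}" and "x \<in> topspace X" and "openin X U" and "x \<in> U"
    then obtain g where g_in_K: "g \<in> I" and "g x = 0" 
          and gim: "\<forall>y\<in>topspace X - U. g y = 1"
      using coc_exists[OF lc cr] unfolding I_def by blast
    have "openin (top_of_set {0..1}) {0..<1::real}"
      using open_real_greaterThanLessThan[of "-1" 1] by (force simp: openin_open)
    moreover have "e x \<in> (\<Pi>\<^sub>E f\<in>I. if f = g then {0..<1} else {0..1})"
      using \<open>e x \<in> I \<rightarrow>\<^sub>E {0..1}\<close> g_in_K by (simp add: e_def' \<open>g x = 0\<close> \<open>x \<in> topspace X\<close> PiE_iff)
    moreover have "e y = e x"
      if "y \<notin> U" and ey: "e y \<in> (\<Pi>\<^sub>E f\<in>I. if f = g then {0..<1} else {0..1})"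
           and y: "y \<in> topspace X" for y
    proof -
      have "e y g \<in> {0..<1}"
        using ey by (smt (verit, ccfv_SIG) PiE_mem g_in_K)
    with gim g_in_K y \<open>y \<notin> U\<close> show ?thesis
      by (fastforce simp: e_def' Pi_iff)
    qed
    ultimately
    show "\<exists>W. openin (product_topology (\<lambda>f. top_of_set {0..1}) I) W \<and> e x \<in> W \<and> e' ` (e ` topspace X \<inter> W - {e x}) \<subseteq> U"
      apply (rule_tac x="PiE I (\<lambda>f. if f = g then {0..<1} else {0..1})" in exI)
      by (auto simp: openin_PiE_gen e')
  qed
  with e' cont have "embedding_map X (product_topology (\<lambda>f. top_of_set {0..1}) I) e"
    unfolding embedding_map_def homeomorphic_map_maps homeomorphic_maps_def
    by (fastforce simp: continuous_map_in_subtopology)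
  then show ?thesis
    by (simp add: I_def e_def hcube_def)
qed


lemma dense_lc_open:
  assumes lc: "locally_compact_space X" and hY: "Hausdorff_space Y"
    and emb: "embedding_map X Y c'" and dense: "Y closure_of (c' ` topspace X) = topspace Y"
  shows "openin Y (c' ` topspace X)"
proof -
  define E' where "E' = c' ` topspace X"
  have hm: "homeomorphic_map X (subtopology Y E') c'" using emb by (simp add: embedding_map_def E'_def)
  have cc: "continuous_map X Y c'"
    using homeomorphic_imp_continuous_map[OF hm] continuous_map_in_subtopology by blast
  have "\<exists>W. openin Y W \<and> y \<in> W \<and> W \<subseteq> E'" if "y \<in> E'" for y
  proof -
    obtain x where x: "x \<in> topspace X" "y = c' x" using \<open>y \<in> E'\<close> E'_def by blast
    obtain U K where U: "openin X U" and K: "compactin X K" and "x \<in> U" "U \<subseteq> K"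
      using lc x unfolding locally_compact_space_def by blast
    have "openin (subtopology Y E') (c' ` U)"
      using homeomorphic_map_openness_eq[OF hm] U by blast
    then obtain W where W: "openin Y W" "c' ` U = W \<inter> E'"
      unfolding openin_subtopology by blast
    have cK: "closedin Y (c' ` K)"
      using compactin_imp_closedin[OF hY image_compactin[OF K cc]] .
    have KX: "K \<subseteq> topspace X" using K compactin_subset_topspace by blast
    have "W \<subseteq> Y closure_of (W \<inter> E')"
    proof -
      have "W \<inter> Y closure_of E' \<subseteq> Y closure_of (W \<inter> E')"
        using openin_Int_closure_of_subset[OF W(1), of E'] .
      moreover have "Y closure_of E' = topspace Y" using dense unfolding E'_def .
      ultimately show ?thesis using openin_subset[OF W(1)] by blast
    qed
    also have "\<dots> \<subseteq> Y closure_of (c' ` K)"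
    proof (rule closure_of_mono)
      show "W \<inter> E' \<subseteq> c' ` K" using W(2) \<open>U \<subseteq> K\<close> by (metis image_mono)
    qed
    also have "\<dots> = c' ` K" using cK by (simp add: closure_of_eq)
    also have "\<dots> \<subseteq> E'" using KX E'_def by blast
    finally show ?thesis using W x \<open>x \<in> U\<close> by blast
  qed
  then have "openin Y E'" by (subst openin_subopen) blast
  then show ?thesis by (simp add: E'_def)
qed

lemma coc_extends:
  assumes lc: "locally_compact_space X" and hY: "Hausdorff_space Y"
    and emb: "embedding_map X Y c'" and dense: "Y closure_of (c' ` topspace X) = topspace Y"
    and g: "g \<in> const_out_compact X"
  shows "\<exists>e. continuous_map Y (top_of_set {0..1}) e \<and> (\<forall>x\<in>topspace X. e (c' x) = g x)"
proof -
  define E' where "E' = c' ` topspace X"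
  have hm: "homeomorphic_map X (subtopology Y E') c'" using emb by (simp add: embedding_map_def E'_def)
  have cc: "continuous_map X Y c'"
    using homeomorphic_imp_continuous_map[OF hm] continuous_map_in_subtopology by blast
  obtain c'' where hms: "homeomorphic_maps X (subtopology Y E') c' c''"
    using hm homeomorphic_map_maps by blast
  have c''c: "continuous_map (subtopology Y E') X c''" and inv: "\<And>x. x \<in> topspace X \<Longrightarrow> c'' (c' x) = x"
    using hms by (auto simp: homeomorphic_maps_def)
  have oE: "openin Y E'" using dense_lc_open[OF lc hY emb dense] unfolding E'_def .
  obtain K k where gc: "continuous_map X (top_of_set {0..1}) g" and K: "compactin X K"
     and gk: "\<forall>x\<in>topspace X - K. g x = k"
    using g unfolding const_out_compact_def by blast
  have KX: "K \<subseteq> topspace X" using K compactin_subset_topspace by blast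
  have cK: "closedin Y (c' ` K)"
    using compactin_imp_closedin[OF hY image_compactin[OF K cc]] .
  define k0 where "k0 = min 1 (max 0 k)"
  have k0: "k0 \<in> {0..1}" by (simp add: k0_def)
  have g01: "g x \<in> {0..1}" if "x \<in> topspace X" for x
    using gc that by (auto simp: continuous_map_def)
  define e where "e y = (if y \<in> E' then g (c'' y) else k0)" for y
  have "continuous_map Y (top_of_set {0..1}) e"
  proof (rule pasting_lemma[where I="{True,False}" and T="\<lambda>i. if i then E' else topspace Y - c' ` K"
         and f="\<lambda>i. e"])
    fix i :: bool assume "i \<in> {True, False}"
    show "openin Y (if i then E' else topspace Y - c' ` K)"
      using oE cK by (cases i) (simp_all add: openin_diff)
    show "continuous_map (subtopology Y (if i then E' else topspace Y - c' ` K)) (top_of_set {0..1}) e"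
    proof (cases i)
      case True
      have cg: "continuous_map (subtopology Y E') (top_of_set {0..1}) (g \<circ> c'')"
        using continuous_map_compose[OF c''c gc] .
      have eq: "\<And>y. y \<in> topspace (subtopology Y E') \<Longrightarrow> (g \<circ> c'') y = e y"
        by (simp add: e_def)
      show ?thesis using True continuous_map_eq[OF cg eq] by simp
    next
      case False
      have "e y = k0" if "y \<in> topspace Y - c' ` K" for y
      proof (cases "y \<in> E'")
        case True
        then obtain x where x: "x \<in> topspace X" "y = c' x" using True unfolding E'_def by blast
        then have "x \<notin> K" using that by blast
        then have "g x = k" using gk x by blast
        then have "k \<in> {0..1}" using g01 x by metis
        then show ?thesis using True x inv \<open>g x = k\<close> by (simp add: e_def k0_def)
      qed (simp add: e_def)
      then have eq: "\<And>y. y \<in> topspace (subtopology Y (topspace Y - c' ` K)) \<Longrightarrow> (\<lambda>_. k0) y = e y"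
        by simp
      have ck: "continuous_map (subtopology Y (topspace Y - c' ` K)) (top_of_set {0..1}) (\<lambda>_. k0)"
        using k0 by simp
      show ?thesis using False continuous_map_eq[OF ck eq] by simp
    qed
  next
    fix y assume "y \<in> topspace Y"
    show "\<exists>j. j \<in> {True, False} \<and> y \<in> (if j then E' else topspace Y - c' ` K) \<and> e y = e y"
    proof (cases "y \<in> c' ` K")
      case True
      then have "y \<in> E'" using KX unfolding E'_def by blast
      then show ?thesis by (intro exI[of _ True]) simp
    next
      case False
      then show ?thesis using \<open>y \<in> topspace Y\<close> by (intro exI[of _ False]) simp
    qed
  qed simp
  moreover have "\<forall>x\<in>topspace X. e (c' x) = g x"
    using inv unfolding e_def E'_def by simp
  ultimately show ?thesis by blast
qed


lemma hcomp_dominated: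
  assumes lc: "locally_compact_space X"
    and T: "T2_preorder_compactification X le Y leY c'"
    and ext: "\<forall>h\<in>H. extends_cont_iso X Y leY c' h"
  shows "dominates X Y leY c' (hcomp_top X H) (hcomp_le H) (hcomp_map X H)"
proof -
  have hY: "Hausdorff_space Y" and emb: "embedding_map X Y c'"
    and dense: "Y closure_of (c' ` topspace X) = topspace Y"
    using T by (simp_all add: T2_preorder_compactification_def preorder_embedding_def)
  define I where "I = H \<union> const_out_compact X"
  define eH where "eH (h::'a\<Rightarrow>real) = (SOME e::'b\<Rightarrow>real. continuous_map Y (top_of_set {0..1}) e \<and> monotone_on (topspace Y) leY (\<le>) e \<and> (\<forall>x\<in>topspace X. e (c' x) = h x))" for h
  define eC where "eC (g::'a\<Rightarrow>real) = (SOME e::'b\<Rightarrow>real. continuous_map Y (top_of_set {0..1}) e \<and> (\<forall>x\<in>topspace X. e (c' x) = g x))" for g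
  have eH: "continuous_map Y (top_of_set {0..1}) (eH h) \<and> monotone_on (topspace Y) leY (\<le>) (eH h) \<and> (\<forall>x\<in>topspace X. eH h (c' x) = h x)" if "h \<in> H" for h
  proof -
    have "\<exists>e. continuous_map Y (top_of_set {0..1}) e \<and> monotone_on (topspace Y) leY (\<le>) e \<and> (\<forall>x\<in>topspace X. e (c' x) = h x)"
      using ext that unfolding extends_cont_iso_def by blast
    then show ?thesis unfolding eH_def by (rule someI_ex)
  qed
  have eC: "continuous_map Y (top_of_set {0..1}) (eC g) \<and> (\<forall>x\<in>topspace X. eC g (c' x) = g x)" if "g \<in> const_out_compact X" for g
  proof -
    have "\<exists>e. continuous_map Y (top_of_set {0..1}) e \<and> (\<forall>x\<in>topspace X. e (c' x) = g x)"
      using coc_extends[OF lc hY emb dense that] .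
    then show ?thesis unfolding eC_def by (rule someI_ex)
  qed
  define Cm where "Cm y = (\<lambda>g\<in>I. if g \<in> H then eH g y else eC g y)" for y
  have ecomp: "continuous_map Y (top_of_set {0..1}) (\<lambda>y. Cm y g)" if "g \<in> I" for g
  proof (cases "g \<in> H")
    case True
    then show ?thesis using eH[OF True] that by (simp add: Cm_def)
  next
    case False
    then have "g \<in> const_out_compact X" using that I_def by blast
    then show ?thesis using eC False that by (simp add: Cm_def)
  qed
  have Cc: "continuous_map Y (hcube X H) Cm"
    unfolding hcube_def I_def[symmetric] continuous_map_componentwise
  proof
    show "Cm ` topspace Y \<subseteq> extensional I" by (auto simp: Cm_def)
    show "\<forall>k\<in>I. continuous_map Y (top_of_set {0..1}) (\<lambda>x. Cm x k)" using ecomp by blast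
  qed
  have Cx: "Cm (c' x) = hcomp_map X H x" if "x \<in> topspace X" for x
    unfolding Cm_def hcomp_map_def I_def[symmetric]
  proof (rule restrict_ext)
    fix g assume "g \<in> I"
    show "(if g \<in> H then eH g (c' x) else eC g (c' x)) = g x"
    proof (cases "g \<in> H")
      case True
      then show ?thesis using eH[OF True] that by simp
    next
      case False
      then have "g \<in> const_out_compact X" using \<open>g \<in> I\<close> I_def by blast
      then show ?thesis using eC False that by simp
    qed
  qed
  have img: "Cm ` topspace Y \<subseteq> hcube X H closure_of (hcomp_map X H ` topspace X)"
  proof -
    have "Cm ` topspace Y = Cm ` (Y closure_of (c' ` topspace X))" using dense by simp
    also have "\<dots> \<subseteq> hcube X H closure_of (Cm ` c' ` topspace X)"
      by (rule continuous_map_image_closure_subset[OF Cc])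
    also have "Cm ` c' ` topspace X = hcomp_map X H ` topspace X"
      unfolding image_image by (rule image_cong) (simp_all add: Cx)
    finally show ?thesis .
  qed
  have "continuous_map Y (hcomp_top X H) Cm"
    unfolding hcomp_top_def using Cc img by (simp add: continuous_map_in_subtopology image_subset_iff_funcset)
  moreover have "monotone_on (topspace Y) leY (hcomp_le H) Cm"
    unfolding monotone_on_def hcomp_le_def
  proof (intro ballI impI)
    fix y1 y2 h assume y: "y1 \<in> topspace Y" "y2 \<in> topspace Y" "leY y1 y2" and h: "h \<in> H"
    then have "h \<in> I" using I_def by blast
    have "eH h y1 \<le> eH h y2" using eH[OF h] y unfolding monotone_on_def by blast
    then show "Cm y1 h \<le> Cm y2 h" using h \<open>h \<in> I\<close> by (simp add: Cm_def)
  qed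
  ultimately show ?thesis using Cx unfolding dominates_def by blast
qed


lemma proj_cont:
  assumes "h \<in> H"
  shows "continuous_map (hcomp_top X H) (top_of_set {0..1::real}) (\<lambda>p. p h)"
  unfolding hcomp_top_def hcube_def
  by (rule continuous_map_from_subtopology, rule continuous_map_product_projection) (use assms in blast)

theorem mainTheorem16:
  fixes X :: "'a topology" and le :: "'a \<Rightarrow> 'a \<Rightarrow> bool" and H :: "('a \<Rightarrow> real) set"
  assumes "locally_compact_space X"
    and "completely_regular_space X" and "Hausdorff_space X"
    and "T2_preordered X le"
    and "\<forall>x\<in>topspace X. \<forall>y\<in>topspace X. le x y \<longleftrightarrow> (\<forall>f\<in>cont_iso_fns X le. f x \<le> f y)"
    and "H \<subseteq> cont_iso_fns X le"
    and "\<forall>x\<in>topspace X. \<forall>y\<in>topspace X. le x y \<longleftrightarrow> (\<forall>h\<in>H. h x \<le> h y)"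
  shows "T2_preorder_compactification X le (hcomp_top X H) (hcomp_le H) (hcomp_map X H)
       \<and> (\<forall>h\<in>H. extends_cont_iso X (hcomp_top X H) (hcomp_le H) (hcomp_map X H) h)
       \<and> (\<forall>(Y :: 'b topology) leY c'.
            T2_preorder_compactification X le Y leY c' \<and>
            (\<forall>h\<in>H. extends_cont_iso X Y leY c' h)
            \<longrightarrow> dominates X Y leY c' (hcomp_top X H) (hcomp_le H) (hcomp_map X H))"
proof (intro conjI ballI allI impI)
  note lc = assms(1) and cr = assms(2) and hs = assms(3)
  have Hc: "\<forall>h\<in>H. continuous_map X (top_of_set {0..1}) h"
    using assms(6) by (auto simp: cont_iso_fns_def)
  define c where "c = hcomp_map X H"
  define cube where "cube = hcube X H"
  define cl where "cl = cube closure_of (c ` topspace X)"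
  have cE: "hcomp_top X H = subtopology cube cl" by (simp add: hcomp_top_def cube_def cl_def c_def)
  have emb: "embedding_map X cube c"
    using hcomp_embedding[OF lc cr hs Hc] by (simp add: c_def cube_def)
  have cont: "continuous_map X cube c"
    using emb unfolding embedding_map_def
    using homeomorphic_imp_continuous_map continuous_map_in_subtopology by blast
  have ccube: "compact_space cube"
    unfolding cube_def hcube_def compact_space_product_topology
    by (simp add: compact_space_subtopology)
  have hcube: "Hausdorff_space cube"
    unfolding cube_def hcube_def Hausdorff_space_product_topology
    by (simp add: Hausdorff_space_subtopology)
  have img: "c ` topspace X \<subseteq> topspace cube"
    using cont by (simp add: continuous_map_def image_subset_iff Pi_iff)
  have clsub: "c ` topspace X \<subseteq> cl"
    unfolding cl_def using img closure_of_subset by blast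
  have tcE: "topspace (subtopology cube cl) = cl"
    by (simp add: cl_def closure_of_subset_topspace inf.absorb2)
  show "T2_preorder_compactification X le (hcomp_top X H) (hcomp_le H) (hcomp_map X H)"
    unfolding T2_preorder_compactification_def c_def[symmetric] cE
  proof (intro conjI)
    show "compact_space (subtopology cube cl)"
      unfolding cl_def by (rule compact_space_subtopology, rule closedin_compact_space[OF ccube]) simp
    show "Hausdorff_space (subtopology cube cl)"
      using hcube by (simp add: Hausdorff_space_subtopology)
    show "T2_preordered (subtopology cube cl) (hcomp_le H)"
      unfolding T2_preordered_def
    proof
      show "preorder_on_space (subtopology cube cl) (hcomp_le H)"
        unfolding preorder_on_space_def hcomp_le_def by (meson order_trans order_refl)
      let ?P = "prod_topology (subtopology cube cl) (subtopology cube cl)"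
      have pc: "continuous_map (subtopology cube cl) euclideanreal (\<lambda>p. p h)" if "h \<in> H" for h
        using proj_cont[OF that, of X] cE continuous_map_in_subtopology by metis
      have clh: "closedin ?P {z \<in> topspace ?P. fst z h \<le> snd z h}" if "h \<in> H" for h
      proof -
        have "continuous_map ?P euclideanreal (\<lambda>z. snd z h - fst z h)"
          by (intro continuous_map_diff continuous_map_compose[OF continuous_map_snd pc[OF that], unfolded o_def]
                 continuous_map_compose[OF continuous_map_fst pc[OF that], unfolded o_def])
        then have "closedin ?P {z \<in> topspace ?P. snd z h - fst z h \<in> {0..}}"
          by (rule closedin_continuous_map_preimage) simp
        then show ?thesis by simp
      qed
      have eq: "pgraph (subtopology cube cl) (hcomp_le H) = {z \<in> topspace ?P. \<forall>h\<in>H. fst z h \<le> snd z h}"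
        by (auto simp: pgraph_def hcomp_le_def)
      show "closedin ?P (pgraph (subtopology cube cl) (hcomp_le H))"
      proof (cases "H = {}")
        case True
        then show ?thesis unfolding eq using closedin_topspace[of ?P] by simp
      next
        case False
        have "{z \<in> topspace ?P. \<forall>h\<in>H. fst z h \<le> snd z h} = \<Inter> ((\<lambda>h. {z \<in> topspace ?P. fst z h \<le> snd z h}) ` H)"
          using False by auto
        moreover have "closedin ?P (\<Inter> ((\<lambda>h. {z \<in> topspace ?P. fst z h \<le> snd z h}) ` H))"
          using False clh by (intro closedin_Inter) auto
        ultimately show ?thesis unfolding eq by simp
      qed
    qed
    show "preorder_embedding X le (subtopology cube cl) (hcomp_le H) c"
      unfolding preorder_embedding_def
    proof
      show "embedding_map X (subtopology cube cl) c"
        using emb clsub by (simp add: embedding_map_in_subtopology)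
      show "\<forall>x\<in>topspace X. \<forall>y\<in>topspace X. le x y = hcomp_le H (c x) (c y)"
        using assms(7) by (simp add: hcomp_le_def c_def hcomp_map_def)
    qed
    show "subtopology cube cl closure_of c ` topspace X = topspace (subtopology cube cl)"
      unfolding tcE closure_of_subtopology using clsub
      by (simp add: Int_absorb1 cl_def)
  qed
next
  fix h assume h: "h \<in> H"
  show "extends_cont_iso X (hcomp_top X H) (hcomp_le H) (hcomp_map X H) h"
    unfolding extends_cont_iso_def
  proof (intro exI conjI)
    show "continuous_map (hcomp_top X H) (top_of_set {0..1}) (\<lambda>p. p h)"
      by (rule proj_cont[OF h])
    show "monotone_on (topspace (hcomp_top X H)) (hcomp_le H) (\<le>) (\<lambda>p. p h)"
      unfolding monotone_on_def hcomp_le_def using h by blast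
    show "\<forall>x\<in>topspace X. hcomp_map X H x h = h x"
      using h by (simp add: hcomp_map_def)
  qed
next
  fix Y :: "'b topology" and leY c'
  assume "T2_preorder_compactification X le Y leY c' \<and> (\<forall>h\<in>H. extends_cont_iso X Y leY c' h)"
  then show "dominates X Y leY c' (hcomp_top X H) (hcomp_le H) (hcomp_map X H)"
    using hcomp_dominated[OF assms(1)] by blast
qed

end
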